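(* Let $\mathcal{X}\subseteq\mathbb{R}^d$ be nonempty, closed and convex, and let $f=\frac1n\sum_{i=1}^nf_i$ with each $f_i:\mathbb{R}^d\to\mathbb{R}$ differentiable; let $x_\star\in\operatorname{arg\,min}_{x\in\mathcal{X}}f(x)$ and assume each $f_i$ has a constrained minimizer $x_{\star,i}\in\operatorname{arg\,min}_{x\in\mathcal{X}}f_i(x)$; let $D:=\max_{1\le i\le n}\|x_{\star,i}-x_\star\|$. Let $\{x_k\}\subseteq\mathcal{X}$ be generated by $x_{k+1}\in\operatorname{arg\,min}_{z\in\mathcal{X}\cap\mathcal{B}(x_k,t_k)}\langle\nabla f_{i_k}(x_k),z\rangle$ with $i_k\in\{1,\dots,n\}$. Fix $k$ and assume $\nabla f_{i_k}(x_k)\ne\nabla f_{i_k}(x_{\star,i_k})$ and $$0<t_k\le\frac{\langle\nabla f_{i_k}(x_k)-\nabla f_{i_k}(x_{\star,i_k}),x_k-x_{\star,i_k}\rangle}{\|\nabla f_{i_k}(x_k)-\nabla f_{i_k}(x_{\star,i_k})\|}.$$ Then $\|x_{k+1}-x_{\star,i_k}\|^2\le\|x_k-x_{\star,i_k}\|^2-t_k^2$, and consequently $\|x_{k+1}-x_\star\|^2\le\|x_k-x_\star\|^2-t_k^2+2Dt_k$.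
   Context: $\|\cdot\|$ is the Euclidean norm, $\mathcal{B}(x,t):=\{y:\|y-x\|\le t\}$. *)

theory Defs
  imports "HOL-Analysis.Analysis"
begin

definition is_argmin_on :: "('a \<Rightarrow> real) \<Rightarrow> 'a set \<Rightarrow> 'a \<Rightarrow> bool" where
  "is_argmin_on g S x \<longleftrightarrow> x \<in> S \<and> (\<forall>y\<in>S. g x \<le> g y)"

end

theory Submission
  imports Defs "HOL-Analysis.Analysis"
begin

lemma first_order:
  fixes F :: "'a::real_inner \<Rightarrow> real"
  assumes "convex X" "b \<in> X" "\<forall>y\<in>X. F b \<le> F y"
    "(F has_derivative (\<lambda>h. G \<bullet> h)) (at b)" "z \<in> X"
  shows "G \<bullet> (z - b) \<ge> 0"
proof (rule ccontr)
  assume neg: "\<not> ?thesis"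
  let ?h = "z - b"
  have "((\<lambda>r. b + r *\<^sub>R ?h) has_derivative (\<lambda>r. r *\<^sub>R ?h)) (at 0)"
    by (intro derivative_eq_intros) auto
  note L = this
  have L2: "(F has_derivative (\<lambda>h. G \<bullet> h)) (at (b + 0 *\<^sub>R ?h))" using assms(4) by simp
  have "((\<lambda>r. F (b + r *\<^sub>R ?h)) has_derivative (\<lambda>r. G \<bullet> (r *\<^sub>R ?h))) (at 0)"
    using has_derivative_compose[OF L L2] by simp
  then have "DERIV (\<lambda>r. F (b + r *\<^sub>R ?h)) 0 :> G \<bullet> ?h"
    unfolding has_field_derivative_def by (simp add: mult.commute[of _ "G \<bullet> ?h"])
  from DERIV_neg_dec_right[OF this] neg obtain d where d: "d > 0"
    "\<forall>s>0. s < d \<longrightarrow> F (b + 0 *\<^sub>R ?h) > F (b + (0 + s) *\<^sub>R ?h)" by force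
  define s where "s = min (d/2) 1"
  have s: "0 < s" "s < d" "s \<le> 1" using d by (auto simp: s_def)
  have "b + s *\<^sub>R ?h = (1 - s) *\<^sub>R b + s *\<^sub>R z" by (simp add: algebra_simps)
  also have "\<dots> \<in> X" using assms(1,2,5) s by (intro convexD) auto
  finally have "F b \<le> F (b + s *\<^sub>R ?h)" using assms(3) by blast
  with d(2) s show False by force
qed

lemma geom:
  fixes a b p g gs :: "'a::real_inner"
  assumes X: "convex X" "b \<in> X"
    and p: "p \<in> X" "norm (p - a) \<le> t"
    and popt: "\<And>z. z \<in> X \<Longrightarrow> norm (z - a) \<le> t \<Longrightarrow> g \<bullet> p \<le> g \<bullet> z"
    and bopt: "gs \<bullet> (p - b) \<ge> 0"
    and w: "g - gs \<noteq> 0" and t: "0 < t" "t \<le> ((g - gs) \<bullet> (a - b)) / norm (g - gs)"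
  shows "(norm (p - b))\<^sup>2 \<le> (norm (a - b))\<^sup>2 - t\<^sup>2"
proof (rule ccontr)
  assume neg: "\<not> ?thesis"
  define w where "w = g - gs"
  define Q where "Q = (norm (p - a))\<^sup>2 + 2 * ((p - a) \<bullet> (b - p))"
  have ab: "(norm (a - b))\<^sup>2 = (norm (p - b))\<^sup>2 + Q"
    unfolding Q_def power2_norm_eq_inner by (simp add: algebra_simps inner_commute)
  have Qlt: "Q < t\<^sup>2" using neg ab by linarith
  define \<delta> where "\<delta> = t\<^sup>2 - Q"
  have dpos: "\<delta> > 0" using Qlt by (simp add: \<delta>_def)
  define N where "N = (norm (b - p))\<^sup>2"
  define s where "s = min 1 (\<delta> / (N + 1))"
  have N0: "N \<ge> 0" by (simp add: N_def)
  have s: "0 < s" "s \<le> 1" "s \<le> \<delta> / (N + 1)" using dpos N0 by (auto simp: s_def)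
  define z where "z = p + s *\<^sub>R (b - p)"
  have zX: "z \<in> X"
  proof -
    have "z = (1 - s) *\<^sub>R p + s *\<^sub>R b" by (simp add: z_def algebra_simps)
    also have "\<dots> \<in> X" using X p s by (intro convexD) auto
    finally show ?thesis .
  qed
  have eq: "(norm (z - a))\<^sup>2 = (1 - s) * (norm (p - a))\<^sup>2 + s * Q + s\<^sup>2 * N"
    unfolding z_def Q_def N_def power2_norm_eq_inner
    by (simp add: algebra_simps inner_commute power2_eq_square)
  have "s * N \<le> \<delta> * N / (N + 1)" using s(3) N0
    by (metis mult.commute mult_right_mono times_divide_eq_left)
  also have "\<dots> < \<delta>" using dpos N0 by (simp add: field_simps)
  finally have sN: "s * N < \<delta>" .
  have "(norm (p - a))\<^sup>2 \<le> t\<^sup>2" using p(2) by (simp add: power_mono)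
  then have "(1 - s) * (norm (p - a))\<^sup>2 \<le> (1 - s) * t\<^sup>2" using s by (intro mult_left_mono) auto
  moreover have "s\<^sup>2 * N = s * (s * N)" by (simp add: power2_eq_square)
  moreover have "s * (s * N) \<le> s * \<delta>" using sN s by (intro mult_left_mono) auto
  ultimately have "(norm (z - a))\<^sup>2 \<le> (1 - s) * t\<^sup>2 + s * Q + s * \<delta>" using eq by linarith
  also have "\<dots> = t\<^sup>2" by (simp add: \<delta>_def algebra_simps)
  finally have "norm (z - a) \<le> t" using t by (meson abs_le_square_iff abs_norm_cancel abs_of_pos less_imp_le power2_le_imp_le)
  then have "g \<bullet> p \<le> g \<bullet> z" using popt zX by blast
  then have "0 \<le> s * (g \<bullet> (b - p))" by (simp add: z_def inner_simps)
  then have gbp: "g \<bullet> (b - p) \<ge> 0" using s by (simp add: zero_le_mult_iff)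
  have wpb: "w \<bullet> (p - b) \<le> 0" using gbp bopt unfolding w_def
    by (simp add: inner_simps inner_commute)
  have nw: "norm w > 0" using w by (simp add: w_def)
  have wab: "w \<bullet> (a - b) \<ge> t * norm w" using t(2) nw by (simp add: w_def field_simps)
  have wpa: "w \<bullet> (p - a) \<ge> - (norm w * norm (p - a))"
    using Cauchy_Schwarz_ineq2[of w "p - a"] by (simp add: abs_le_iff)
  have "w \<bullet> (p - b) = w \<bullet> (p - a) + w \<bullet> (a - b)" by (simp add: inner_simps)
  have "norm w * norm (p - a) \<le> norm w * t" using p(2) nw by simp
  have "norm w * norm (p - a) \<ge> norm w * t"
    using wpb wab wpa \<open>w \<bullet> (p - b) = _\<close> by (simp add: algebra_simps)
  then have pat: "norm (p - a) = t" using \<open>norm w * norm (p - a) \<le> norm w * t\<close> nw by simp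
  have wpa': "w \<bullet> (p - a) = - t * norm w" and wab': "w \<bullet> (a - b) = t * norm w"
    using wpb wab wpa \<open>w \<bullet> (p - b) = _\<close> pat by (simp_all add: algebra_simps)
  have ww: "w \<bullet> w = norm w * norm w" by (simp add: dot_square_norm power2_eq_square)
  have "(norm (norm w *\<^sub>R (p - a) + t *\<^sub>R w))\<^sup>2 = (norm w)\<^sup>2 * (norm (p - a))\<^sup>2 + 2 * t * norm w * (w \<bullet> (p - a)) + t\<^sup>2 * (norm w)\<^sup>2"
    unfolding power2_norm_eq_inner by (simp add: algebra_simps inner_commute power2_eq_square ww)
  also have "\<dots> = 0" unfolding pat wpa' by (simp add: algebra_simps power2_eq_square)
  finally have "norm w *\<^sub>R (p - a) = - t *\<^sub>R w" by (simp add: add_eq_0_iff)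
  then have "(1 / norm w) *\<^sub>R (norm w *\<^sub>R (p - a)) = (1 / norm w) *\<^sub>R (- t *\<^sub>R w)" by simp
  then have "p - a = (- t / norm w) *\<^sub>R w" using nw by simp
  then have "(p - a) \<bullet> (b - a) = t / norm w * (w \<bullet> (a - b))"
    by (simp add: inner_simps diff_divide_distrib right_diff_distrib)
  also have "\<dots> = t\<^sup>2" using wab' nw by (simp add: power2_eq_square)
  finally have pba: "(p - a) \<bullet> (b - a) = t\<^sup>2" .
  have "Q = 2 * ((p - a) \<bullet> (b - a)) - (norm (p - a))\<^sup>2"
    unfolding Q_def power2_norm_eq_inner by (simp add: algebra_simps inner_commute)
  then have "Q = t\<^sup>2" using pba pat by simp
  with Qlt show False by simp
qed

theorem theorem12:
  fixes X :: "(real ^ 'd) set"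
    and n :: nat
    and fs :: "nat \<Rightarrow> real ^ 'd \<Rightarrow> real"
    and grad :: "nat \<Rightarrow> real ^ 'd \<Rightarrow> real ^ 'd"
    and f :: "real ^ 'd \<Rightarrow> real"
    and xstar :: "real ^ 'd"
    and xs :: "nat \<Rightarrow> real ^ 'd"
    and x :: "nat \<Rightarrow> real ^ 'd"
    and i :: "nat \<Rightarrow> nat"
    and t :: "nat \<Rightarrow> real"
    and D :: real
    and k :: nat
  assumes "X \<noteq> {}" and "closed X" and "convex X"
    and "n \<ge> 1"
    and "f = (\<lambda>y. (1 / real n) * (\<Sum>j = 1..n. fs j y))"
    and "\<And>j y. j \<in> {1..n} \<Longrightarrow> (fs j has_derivative (\<lambda>h. grad j y \<bullet> h)) (at y)"
    and "is_argmin_on f X xstar"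
    and "\<And>j. j \<in> {1..n} \<Longrightarrow> is_argmin_on (fs j) X (xs j)"
    and "D = Max ((\<lambda>j. norm (xs j - xstar)) ` {1..n})"
    and "\<And>m. x m \<in> X"
    and "\<And>m. i m \<in> {1..n}"
    and "\<And>m. is_argmin_on (\<lambda>z. grad (i m) (x m) \<bullet> z) (X \<inter> cball (x m) (t m)) (x (Suc m))"
    and "grad (i k) (x k) \<noteq> grad (i k) (xs (i k))"
    and "0 < t k"
    and "t k \<le> ((grad (i k) (x k) - grad (i k) (xs (i k))) \<bullet> (x k - xs (i k)))
                / norm (grad (i k) (x k) - grad (i k) (xs (i k)))"
  shows "(norm (x (Suc k) - xs (i k)))\<^sup>2 \<le> (norm (x k - xs (i k)))\<^sup>2 - (t k)\<^sup>2
     \<and> (norm (x (Suc k) - xstar))\<^sup>2 \<le> (norm (x k - xstar))\<^sup>2 - (t k)\<^sup>2 + 2 * D * t k"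
proof -
  let ?a = "x k" and ?b = "xs (i k)" and ?p = "x (Suc k)" and ?g = "grad (i k) (x k)"
    and ?gs = "grad (i k) (xs (i k))"
  have ik: "i k \<in> {1..n}" using assms(11) .
  have bmin: "is_argmin_on (fs (i k)) X ?b" using assms(8)[OF ik] .
  have pmin: "is_argmin_on (\<lambda>z. ?g \<bullet> z) (X \<inter> cball ?a (t k)) ?p" using assms(12) .
  have bX: "?b \<in> X" and bm: "\<forall>y\<in>X. fs (i k) ?b \<le> fs (i k) y"
    using bmin by (auto simp: is_argmin_on_def)
  have pX: "?p \<in> X" and pa: "norm (?p - ?a) \<le> t k"
    and popt: "\<And>z. z \<in> X \<Longrightarrow> norm (z - ?a) \<le> t k \<Longrightarrow> ?g \<bullet> ?p \<le> ?g \<bullet> z"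
    using pmin by (auto simp: is_argmin_on_def dist_norm norm_minus_commute)
  have bopt: "?gs \<bullet> (?p - ?b) \<ge> 0"
    by (rule first_order[OF assms(3) bX bm assms(6)[OF ik] pX])
  have w: "?g - ?gs \<noteq> 0" using assms(13) by simp
  have P1: "(norm (?p - ?b))\<^sup>2 \<le> (norm (?a - ?b))\<^sup>2 - (t k)\<^sup>2"
    by (rule geom[OF assms(3) bX pX pa popt bopt w assms(14) assms(15)])
  have bD: "norm (?b - xstar) \<le> D"
    unfolding assms(9) using ik by (intro Max_ge) auto
  have id: "(norm (?p - xstar))\<^sup>2 = (norm (?p - ?b))\<^sup>2 - (norm (?a - ?b))\<^sup>2 + (norm (?a - xstar))\<^sup>2 + 2 * ((?p - ?a) \<bullet> (?b - xstar))"
    unfolding power2_norm_eq_inner by (simp add: algebra_simps inner_commute)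
  have "(?p - ?a) \<bullet> (?b - xstar) \<le> norm (?p - ?a) * norm (?b - xstar)"
    by (rule norm_cauchy_schwarz)
  also have "\<dots> \<le> t k * D" using pa bD assms(14) by (intro mult_mono) auto
  finally have "(?p - ?a) \<bullet> (?b - xstar) \<le> t k * D" .
  with id P1 show ?thesis by (simp add: algebra_simps)
qed

end
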